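(* Let $\beta^*_{\mathrm{CW}}(p)=\sup\{\beta\ge0:\sup_{t\in[0,1]}(\beta t^p-I(t))=0\}$ for integers $p\ge2$. Then (1) $\lim_{p\to\infty}\beta^*_{\mathrm{CW}}(p)=\log2$; (2) the sequence $\{\beta^*_{\mathrm{CW}}(p)\}_{p\ge2}$ is strictly increasing; (3) $\beta^*_{\mathrm{CW}}(2)=1/2$.
   Context: $I(t)=\frac12[(1+t)\log(1+t)+(1-t)\log(1-t)]$ for $t\in[0,1]$ (with $0\log0=0$). *)

theory Defs
  imports "HOL-Analysis.Analysis"
begin

definition xlogx :: "real \<Rightarrow> real" where
  "xlogx x = (if x = 0 then 0 else x * ln x)"

definition I_rate :: "real \<Rightarrow> real" where
  "I_rate t = (xlogx (1 + t) + xlogx (1 - t)) / 2"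

definition beta_CW :: "nat \<Rightarrow> real" where
  "beta_CW p = Sup {\<beta>::real. \<beta> \<ge> 0 \<and> (SUP t\<in>{0..1::real}. \<beta> * t ^ p - I_rate t) = 0}"

end

theory Submission
  imports Defs "HOL-Real_Asymp.Real_Asymp"
begin

definition J :: "real \<Rightarrow> real" where
  "J t = ((1+t)*ln(1+t) + (1-t)*ln(1-t))/2"

lemma I_J: "-1 < t \<Longrightarrow> t < 1 \<Longrightarrow> I_rate t = J t"
  by (simp add: I_rate_def J_def xlogx_def)

lemma I_1: "I_rate 1 = ln 2"
  by (simp add: I_rate_def xlogx_def)

lemma I_0: "I_rate 0 = 0"
  by (simp add: I_rate_def xlogx_def)

lemma J_deriv:
  assumes "-1 < t" "t < 1"
  shows "(J has_real_derivative (ln(1+t) - ln(1-t))/2) (at t)"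
proof -
  have "((\<lambda>t. ((1+t)*ln(1+t) + (1-t)*ln(1-t))/2) has_real_derivative
     (((0+1)*ln(1+t) + (1+t)*((0+1)/(1+t)) + ((0-1)*ln(1-t) + (1-t)*((0-1)/(1-t))))/2)) (at t)"
    using assms by (intro derivative_eq_intros) auto
  moreover have "(((0+1)*ln(1+t) + (1+t)*((0+1)/(1+t)) + ((0-1)*ln(1-t) + (1-t)*((0-1)/(1-t))))/2)
      = (ln(1+t) - ln(1-t))/2" using assms by (simp add: field_simps)
  ultimately show ?thesis unfolding J_def[abs_def] by simp
qed

lemma L_ge:
  fixes t :: real
  assumes "0 \<le> t" "t < 1"
  shows "t \<le> (ln(1+t) - ln(1-t))/2"
proof -
  let ?f = "\<lambda>x::real. (ln(1+x) - ln(1-x))/2 - x"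
  have "?f 0 \<le> ?f t"
  proof (rule DERIV_nonneg_imp_nondecreasing[OF assms(1)])
    fix x assume x: "0 \<le> x" "x \<le> t"
    have "(?f has_real_derivative ((0+1)/(1+x) - (0-1)/(1-x))/2 - 1) (at x)"
      using x assms by (intro derivative_eq_intros) auto
    moreover have "0 \<le> ((0+1)/(1+x) - (0-1)/(1-x))/2 - (1::real)"
    proof -
      have pos: "0 < (1+x)*(1-x)" using x assms by simp
      have le: "(1+x)*(1-x) \<le> 1" using x by (simp add: algebra_simps)
      have "(0+1)/(1+x) - (0-1)/(1-x) = 2/((1+x)*(1-x))"
        using x assms by (simp add: field_simps)
      moreover have "2 \<le> 2/((1+x)*(1-x))" using pos le by (simp add: le_divide_eq)
      ultimately show ?thesis by simp
    qed
    ultimately show "\<exists>y. (?f has_real_derivative y) (at x) \<and> 0 \<le> y" by blast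
  qed
  then show ?thesis by simp
qed

lemma J_ge:
  assumes "0 \<le> t" "t < 1"
  shows "t^2/2 \<le> J t"
proof -
  let ?f = "\<lambda>x::real. J x - x^2/2"
  have "?f 0 \<le> ?f t"
  proof (rule DERIV_nonneg_imp_nondecreasing[OF assms(1)])
    fix x assume x: "0 \<le> x" "x \<le> t"
    have "(?f has_real_derivative (ln(1+x) - ln(1-x))/2 - x) (at x)"
      using x assms J_deriv[of x]
      by (auto intro!: derivative_eq_intros)
    moreover have "0 \<le> (ln(1+x) - ln(1-x))/2 - x" using L_ge[of x] x assms by simp
    ultimately show "\<exists>y. (?f has_real_derivative y) (at x) \<and> 0 \<le> y" by blast
  qed
  then show ?thesis by (simp add: J_def)
qed

lemma J_mono:
  assumes "0 \<le> a" "a \<le> b" "b < 1"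
  shows "J a \<le> J b"
proof (rule DERIV_nonneg_imp_nondecreasing[OF assms(2)])
  fix x assume x: "a \<le> x" "x \<le> b"
  have "(J has_real_derivative (ln(1+x) - ln(1-x))/2) (at x)"
    using x assms J_deriv[of x] by auto
  moreover have "0 \<le> (ln(1+x) - ln(1-x))/2" using L_ge[of x] x assms by simp
  ultimately show "\<exists>y. (J has_real_derivative y) (at x) \<and> 0 \<le> y" by blast
qed

lemma J_upper:
  assumes "0 < d" "d \<le> 1"
  shows "J (1 - d) \<le> ln 2 - d/2 * ln (2/d)"
proof -
  have "J (1 - d) = ((2-d)*ln(2-d) + d * ln d)/2" by (simp add: J_def)
  also have "\<dots> \<le> ((2-d)*ln 2 + d * ln d)/2"
    using assms by (intro divide_right_mono add_right_mono mult_left_mono) auto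
  also have "ln (2/d) = ln 2 - ln d" using assms by (simp add: ln_div)
  then have e: "ln d = ln 2 - ln (2/d)" by simp
  have "d * ln d = d * ln 2 - d * ln (2/d)" unfolding e by (simp add: right_diff_distrib)
  then have "((2-d)*ln 2 + d * ln d)/2 = ln 2 - d/2 * ln (2/d)"
    by (simp add: left_diff_distrib)
  finally show ?thesis .
qed

lemma I_ge: "0 \<le> t \<Longrightarrow> t \<le> 1 \<Longrightarrow> t^2/2 \<le> I_rate t"
proof (cases "t = 1")
  case True
  have "ln (1/2::real) \<le> 1/2 - 1" by (rule ln_le_minus_one) simp
  then have "1/2 \<le> ln (2::real)" by (simp add: ln_div)
  then show ?thesis using True by (simp add: I_1)
next
  case False
  assume "0 \<le> t" "t \<le> 1"
  then show ?thesis using False I_J[of t] J_ge[of t] by simp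
qed

lemma I_nonneg: "0 \<le> t \<Longrightarrow> t \<le> 1 \<Longrightarrow> 0 \<le> I_rate t"
proof -
  assume "0 \<le> t" "t \<le> 1"
  moreover have "0 \<le> t^2/2" by simp
  ultimately show ?thesis using I_ge[of t] by linarith
qed

lemma I_mono:
  assumes "0 \<le> a" "a \<le> b" "b \<le> 1"
  shows "I_rate a \<le> I_rate b"
proof (cases "b < 1")
  case True
  then show ?thesis using assms I_J J_mono by simp
next
  case False
  then have b: "b = 1" using assms by simp
  show ?thesis
  proof (cases "a = 1")
    case True then show ?thesis using b by simp
  next
    case False
    then have a1: "a < 1" using assms b by simp
    have "J (1 - (1 - a)) \<le> ln 2 - (1-a)/2 * ln (2/(1-a))"
      using J_upper[of "1-a"] assms a1 by simp
    also have "\<dots> \<le> ln 2"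
    proof -
      have "0 \<le> ln (2/(1-a))" using a1 assms by simp
      then show ?thesis using a1 by simp
    qed
    finally show ?thesis using b I_1 I_J[of a] a1 assms by simp
  qed
qed

lemma SUP_iff:
  assumes p: "p \<ge> 1" and b: "\<beta> \<ge> 0"
  shows "(SUP t\<in>{0..1::real}. \<beta> * t ^ p - I_rate t) = 0 \<longleftrightarrow> (\<forall>t\<in>{0..1}. \<beta>*t^p \<le> I_rate t)"
proof -
  have bdd: "bdd_above ((\<lambda>t. \<beta> * t ^ p - I_rate t) ` {0..1})"
  proof (rule bdd_aboveI2[where M=\<beta>])
    fix t :: real assume t: "t \<in> {0..1}"
    have "\<beta> * t^p \<le> \<beta> * 1" using t b by (intro mult_left_mono power_le_one) auto
    then show "\<beta> * t ^ p - I_rate t \<le> \<beta>" using I_nonneg[of t] t by simp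
  qed
  show ?thesis
  proof
    assume h: "(SUP t\<in>{0..1::real}. \<beta> * t ^ p - I_rate t) = 0"
    show "\<forall>t\<in>{0..1}. \<beta>*t^p \<le> I_rate t"
    proof
      fix t :: real assume t: "t \<in> {0..1}"
      have "\<beta> * t ^ p - I_rate t \<le> (SUP t\<in>{0..1::real}. \<beta> * t ^ p - I_rate t)"
        by (rule cSUP_upper[OF t bdd])
      then show "\<beta>*t^p \<le> I_rate t" using h by simp
    qed
  next
    assume h: "\<forall>t\<in>{0..1}. \<beta>*t^p \<le> I_rate t"
    have "(SUP t\<in>{0..1::real}. \<beta> * t ^ p - I_rate t) \<le> 0"
      by (rule cSUP_least) (use h in auto)
    moreover have "\<beta> * 0 ^ p - I_rate 0 \<le> (SUP t\<in>{0..1::real}. \<beta> * t ^ p - I_rate t)"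
      by (rule cSUP_upper[OF _ bdd]) auto
    then have "0 \<le> (SUP t\<in>{0..1::real}. \<beta> * t ^ p - I_rate t)" using p by (simp add: I_0 power_0_left)
    ultimately show "(SUP t\<in>{0..1::real}. \<beta> * t ^ p - I_rate t) = 0" by simp
  qed
qed

definition T :: "nat \<Rightarrow> real set" where
  "T p = {\<beta>. \<beta> \<ge> 0 \<and> (\<forall>t\<in>{0..1}. \<beta>*t^p \<le> I_rate t)}"

lemma bCW_T: "p \<ge> 1 \<Longrightarrow> beta_CW p = Sup (T p)"
  unfolding beta_CW_def T_def using SUP_iff by (metis (no_types, lifting))

lemma T_bdd: "bdd_above (T p)"
proof (rule bdd_aboveI[where M="ln 2"])
  fix x assume "x \<in> T p"
  then have h: "\<forall>t\<in>{0..1}. x*t^p \<le> I_rate t" unfolding T_def by auto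
  have "(1::real) \<in> {0..1}" by simp
  then have "x * 1^p \<le> I_rate 1" using h by blast
  then show "x \<le> ln 2" using I_1 by simp
qed

lemma T_ne: "T p \<noteq> {}"
proof -
  have "0 \<in> T p" unfolding T_def using I_nonneg by auto
  then show ?thesis by auto
qed

lemma bCW_lower:
  assumes "p \<ge> 1" "c \<ge> 0" "\<And>t. 0 \<le> t \<Longrightarrow> t \<le> 1 \<Longrightarrow> c * t^p \<le> I_rate t"
  shows "c \<le> beta_CW p"
proof -
  have "c \<in> T p" unfolding T_def using assms by auto
  then show ?thesis using bCW_T[OF assms(1)] cSup_upper[OF _ T_bdd] by simp
qed

lemma bCW_prop:
  assumes "p \<ge> 1" "0 \<le> t" "t \<le> 1"
  shows "beta_CW p * t^p \<le> I_rate t"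
proof (cases "t = 0")
  case True then show ?thesis using assms I_0 by (simp add: zero_power)
next
  case False
  then have tp: "t^p > 0" using assms by simp
  have "beta_CW p \<le> I_rate t / t^p"
    unfolding bCW_T[OF assms(1)]
  proof (rule cSup_least[OF T_ne])
    fix x assume "x \<in> T p"
    then have "x * t^p \<le> I_rate t" unfolding T_def using assms by auto
    then show "x \<le> I_rate t / t^p" using tp by (simp add: pos_le_divide_eq)
  qed
  then show ?thesis using tp by (simp add: pos_le_divide_eq)
qed

lemma bCW_lt_ln2:
  assumes "p \<ge> 1"
  shows "beta_CW p < ln 2"
proof -
  define d :: real where "d = 1 / 2^(2*p)"
  have d0: "0 < d" and d1: "d \<le> 1" unfolding d_def by auto
  have dh: "d < 1" unfolding d_def using assms
    by (simp add: one_less_power)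
  define t0 where "t0 = 1 - d"
  have ln2d: "ln (2/d) = (2*p+1) * ln 2"
  proof -
    have "2/d = 2^(2*p+1)" unfolding d_def by simp
    moreover have "ln ((2::real)^(2*p+1)) = real (2*p+1) * ln 2" by (rule ln_realpow)
    ultimately show ?thesis by simp
  qed
  have "beta_CW p * t0^p \<le> I_rate t0" using bCW_prop[OF assms, of t0] d0 d1 unfolding t0_def by simp
  also have "\<dots> = J t0" using I_J[of t0] d0 dh unfolding t0_def by simp
  also have "\<dots> \<le> ln 2 - d/2 * ln (2/d)" using J_upper[OF d0 d1] unfolding t0_def by simp
  also have "\<dots> = ln 2 - d/2 * ((2*p+1) * ln 2)" by (simp add: ln2d)
  also have "\<dots> < ln 2 * (1 + p * (-d))"
  proof -
    have "0 < d/2 * ln 2" using d0 by simp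
    then show ?thesis by (simp add: algebra_simps)
  qed
  also have "\<dots> \<le> ln 2 * (1 + (-d))^p"
    using Bernoulli_inequality[of "-d" p] d1 by (intro mult_left_mono) auto
  also have "\<dots> = ln 2 * t0^p" unfolding t0_def by simp
  finally have "beta_CW p * t0^p < ln 2 * t0^p" .
  moreover have "t0^p > 0" unfolding t0_def using dh by simp
  ultimately show ?thesis by simp
qed

lemma J_lim: "(J \<longlongrightarrow> ln 2) (at_left 1)"
proof -
  have "((\<lambda>t::real. (((1+t)*ln(1+t) + (1-t)*ln(1-t))/2)) \<longlongrightarrow> ln 2) (at_left 1)"
    by real_asymp
  then show ?thesis unfolding J_def[abs_def] .
qed

lemma J_near1:
  assumes "m < ln 2"
  obtains t0 where "0 < t0" "t0 < 1" "m < J t0"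
proof -
  have "eventually (\<lambda>t. m < J t) (at_left (1::real))"
    using order_tendstoD(1)[OF J_lim assms] .
  moreover have "eventually (\<lambda>t. t \<in> {0<..<1}) (at_left (1::real))"
    by (rule eventually_at_left_real) simp
  ultimately have "eventually (\<lambda>t. m < J t \<and> t \<in> {0<..<1}) (at_left (1::real))"
    by (rule eventually_conj)
  then obtain t where "m < J t \<and> t \<in> {0<..<1}"
    using eventually_happens'[OF trivial_limit_at_left_real] by blast
  then show ?thesis using that by auto
qed

lemma bCW_2: "beta_CW 2 = 1/2"
proof (rule antisym)
  show "1/2 \<le> beta_CW 2"
    by (rule bCW_lower) (use I_ge in auto)
  show "beta_CW 2 \<le> 1/2"
  proof (rule ccontr)
    assume "\<not> beta_CW 2 \<le> 1/2"
    then have b: "1/2 < beta_CW 2" by simp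
    have lim: "((\<lambda>t::real. J t / t^2) \<longlongrightarrow> 1/2) (at_right 0)"
    proof -
      have "((\<lambda>t::real. (((1+t)*ln(1+t) + (1-t)*ln(1-t))/2) / t^2) \<longlongrightarrow> 1/2) (at_right 0)"
        by real_asymp
      then show ?thesis unfolding J_def[abs_def] .
    qed
    have "eventually (\<lambda>t. J t / t^2 < beta_CW 2) (at_right (0::real))"
      using order_tendstoD(2)[OF lim b] .
    moreover have "eventually (\<lambda>t. t \<in> {0<..<1}) (at_right (0::real))"
      by (rule eventually_at_right_real) simp
    ultimately have "eventually (\<lambda>t. J t / t^2 < beta_CW 2 \<and> t \<in> {0<..<1}) (at_right (0::real))"
      by (rule eventually_conj)
    then obtain t where t: "J t / t^2 < beta_CW 2" "0 < t" "t < 1"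
      using eventually_happens'[OF trivial_limit_at_right_real] by auto
    have "J t < beta_CW 2 * t^2" using t by (simp add: divide_less_eq)
    moreover have "beta_CW 2 * t^2 \<le> I_rate t" using bCW_prop[of 2 t] t by simp
    ultimately show False using I_J[of t] t by simp
  qed
qed

lemma bCW_strict:
  assumes p: "p \<ge> 2"
  shows "beta_CW p < beta_CW (Suc p)"
proof -
  define m where "m = beta_CW p"
  have m_ge: "1/2 \<le> m" unfolding m_def
  proof (rule bCW_lower)
    fix t :: real assume t: "0 \<le> t" "t \<le> 1"
    have "t^p \<le> t^2" using t p by (intro power_decreasing) auto
    then show "1/2 * t^p \<le> I_rate t" using I_ge[OF t] by simp
  qed (use p in auto)
  have m_lt: "m < ln 2" unfolding m_def using bCW_lt_ln2 p by simp
  obtain t0 where t0: "0 < t0" "t0 < 1" "m < J t0" using J_near1[OF m_lt] by blast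
  define c where "c = min (J t0) (m / t0)"
  have mt0: "m < m / t0" using t0 m_ge by (simp add: less_divide_eq)
  have cm: "m < c" unfolding c_def using t0 mt0 by simp
  have "c \<le> beta_CW (Suc p)"
  proof (rule bCW_lower)
    show "0 \<le> c" using cm m_ge by simp
    fix t :: real assume t: "0 \<le> t" "t \<le> 1"
    show "c * t ^ Suc p \<le> I_rate t"
    proof (cases "t \<le> t0")
      case True
      have "c \<le> m / t0" unfolding c_def by simp
      then have "c * t ^ Suc p \<le> (m / t0) * t ^ Suc p"
        by (rule mult_right_mono) (use t in auto)
      also have "\<dots> = m * t^p * (t / t0)" by simp
      also have "\<dots> \<le> m * t^p * 1"
        using True t t0 m_ge by (intro mult_left_mono) auto
      also have "\<dots> \<le> I_rate t" using bCW_prop[of p t] t p unfolding m_def by simp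
      finally show ?thesis .
    next
      case False
      have "c * t ^ Suc p \<le> c * 1"
        using t cm m_ge by (intro mult_left_mono power_le_one) auto
      also have "\<dots> \<le> J t0" unfolding c_def by simp
      also have "\<dots> = I_rate t0" using I_J[of t0] t0 by simp
      also have "\<dots> \<le> I_rate t" using I_mono[of t0 t] False t t0 by simp
      finally show ?thesis .
    qed
  qed simp
  then show ?thesis using cm unfolding m_def by simp
qed

lemma bCW_lim: "beta_CW \<longlonglongrightarrow> ln 2"
  unfolding lim_sequentially
proof (intro allI impI)
  fix r :: real assume r: "0 < r"
  obtain t0 where t0: "0 < t0" "t0 < 1" "ln 2 - r < J t0" using J_near1[of "ln 2 - r"] r by auto
  obtain N where N: "t0^N < 1/2" using real_arch_pow_inv[of "1/2" t0] t0 by auto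
  define c where "c = min (J t0) 1"
  have c: "ln 2 - r < c" unfolding c_def using t0 ln_2_less_1 r by simp
  show "\<exists>no. \<forall>n\<ge>no. dist (beta_CW n) (ln 2) < r"
  proof (intro exI allI impI)
    fix n assume n: "N + 2 \<le> n"
    have "min c (ln 2) \<le> beta_CW n"
    proof (rule bCW_lower)
      have "0 \<le> t0^2/2" by simp
      then have "0 \<le> J t0" using J_ge[of t0] t0 by linarith
      then show "0 \<le> min c (ln 2)" unfolding c_def by simp
      fix t :: real assume t: "0 \<le> t" "t \<le> 1"
      show "min c (ln 2) * t ^ n \<le> I_rate t"
      proof (cases "t \<le> t0")
        case True
        have "t^(n-2) \<le> t0^(n-2)" using True t by (intro power_mono) auto
        also have "\<dots> \<le> t0^N" using n t0 by (intro power_decreasing) auto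
        finally have tn: "t^(n-2) \<le> 1/2" using N by simp
        have "n = (n-2)+2" using n by simp
        then have eq: "t^n = t^(n-2) * t^2" by (metis power_add)
        have "min c (ln 2) * t ^ n \<le> 1 * t^n"
          unfolding c_def using t by (intro mult_right_mono) auto
        also have "\<dots> \<le> 1/2 * t^2" unfolding eq using mult_right_mono[OF tn, of "t^2"] by simp
        also have "\<dots> \<le> I_rate t" using I_ge[OF t] by simp
        finally show ?thesis .
      next
        case False
        have "min c (ln 2) * t ^ n \<le> min c (ln 2) * 1"
          using t \<open>0 \<le> J t0\<close> by (intro mult_left_mono power_le_one) (auto simp: c_def)
        also have "\<dots> \<le> J t0" unfolding c_def by simp
        also have "\<dots> = I_rate t0" using I_J[of t0] t0 by simp
        also have "\<dots> \<le> I_rate t" using I_mono[of t0 t] False t t0 by simp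
        finally show ?thesis .
      qed
    qed (use n in auto)
    moreover have "beta_CW n < ln 2" using bCW_lt_ln2[of n] n by simp
    ultimately show "dist (beta_CW n) (ln 2) < r"
      using c r by (simp add: dist_real_def)
  qed
qed

theorem mainTheorem20:
  shows "(beta_CW \<longlonglongrightarrow> ln 2)
     \<and> (\<forall>p::nat. p \<ge> 2 \<longrightarrow> beta_CW p < beta_CW (Suc p))
     \<and> beta_CW 2 = 1 / 2"
  using bCW_lim bCW_strict bCW_2 by blast

end
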